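(* Let $n\ge 4$, let $\pi$ be a real representation of $S_n$, and let $s_1=(1,2)$, $s_3=(3,4)$. Then the integer $h_\pi=\frac{\chi_\pi(1)-\chi_\pi(s_1s_3)}{2}$ is even.
   Context: $\chi_\pi$ denotes the character of $\pi$. *)

theory Defs
  imports "Jordan_Normal_Form.Matrix" "HOL-Combinatorics.Permutations" "HOL-Combinatorics.Transposition"
begin

definition real_rep :: "nat \<Rightarrow> nat \<Rightarrow> ((nat \<Rightarrow> nat) \<Rightarrow> real mat) \<Rightarrow> bool" where
  "real_rep n d rho \<longleftrightarrow>
     (\<forall>\<sigma>. \<sigma> permutes {1..n} \<longrightarrow> rho \<sigma> \<in> carrier_mat d d) \<and>
     rho id = 1\<^sub>m d \<and>
     (\<forall>\<sigma> \<tau>. \<sigma> permutes {1..n} \<longrightarrow> \<tau> permutes {1..n} \<longrightarrow> rho (\<sigma> \<circ> \<tau>) = rho \<sigma> * rho \<tau>)"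

definition mat_trace :: "real mat \<Rightarrow> real" where
  "mat_trace A = (\<Sum>i<dim_row A. A $$ (i, i))"

definition character :: "((nat \<Rightarrow> nat) \<Rightarrow> real mat) \<Rightarrow> (nat \<Rightarrow> nat) \<Rightarrow> real" where
  "character rho \<sigma> = mat_trace (rho \<sigma>)"

end

theory Submission imports Defs "Jordan_Normal_Form.Schur_Decomposition" begin

definition tr :: "'a::comm_ring_1 mat \<Rightarrow> 'a" where
  "tr A = (\<Sum>i<dim_row A. A $$ (i, i))"

lemma tr_mult_comm:
  fixes A B :: "'a::comm_ring_1 mat"
  assumes A: "A \<in> carrier_mat n m" and B: "B \<in> carrier_mat m n"
  shows "tr (A * B) = tr (B * A)"
proof -
  have "tr (A * B) = (\<Sum>i<n. \<Sum>j<m. A $$ (i,j) * B $$ (j,i))"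
    using A B unfolding tr_def
    by (auto simp: scalar_prod_def lessThan_atLeast0 intro!: sum.cong)
  also have "\<dots> = (\<Sum>j<m. \<Sum>i<n. B $$ (j,i) * A $$ (i,j))"
    by (subst sum.swap) (simp add: mult.commute)
  also have "\<dots> = tr (B * A)"
    using A B unfolding tr_def
    by (auto simp: scalar_prod_def lessThan_atLeast0 intro!: sum.cong)
  finally show ?thesis .
qed

lemma idem_tr_complex:
  fixes Q :: "complex mat"
  assumes Q: "Q \<in> carrier_mat n n" and idem: "Q * Q = Q"
  shows "\<exists>m::nat. tr Q = of_nat m"
proof -
  obtain es where cp: "char_poly Q = (\<Prod>a\<leftarrow>es. [:- a, 1:])"
    using char_poly_factorized[OF Q] by blast
  obtain B P P' where sd: "schur_decomposition Q es = (B,P,P')"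
    by (cases "schur_decomposition Q es") auto
  from schur_decomposition[OF Q cp sd] have sim: "similar_mat_wit Q B P P'"
    and ut: "upper_triangular B" by auto
  note w = similar_mat_witD2[OF Q sim]
  have Bc: "B \<in> carrier_mat n n" and Pc: "P \<in> carrier_mat n n" and P'c: "P' \<in> carrier_mat n n"
    using w by auto
  have PP': "P * P' = 1\<^sub>m n" and P'P: "P' * P = 1\<^sub>m n" and QB: "Q = P * B * P'" using w by auto
  have BQ: "B = P' * Q * P"
  proof -
    have "P' * Q * P = (P' * P) * B * (P' * P)"
      unfolding QB using Bc Pc P'c by (simp add: assoc_mult_mat[of _ n n _ n _ n])
    then show ?thesis using P'P Bc by simp
  qed
  have BB: "B * B = B"
  proof -
    have "B * B = P' * Q * (P * P') * Q * P"
      unfolding BQ using Q Pc P'c by (simp add: assoc_mult_mat[of _ n n _ n _ n])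
    also have "\<dots> = P' * (Q * Q) * P"
      unfolding PP' using Q Pc P'c by (simp add: assoc_mult_mat[of _ n n _ n _ n])
    finally show ?thesis using idem BQ by simp
  qed
  have diag: "B $$ (i,i) = 0 \<or> B $$ (i,i) = 1" if i: "i < n" for i
  proof -
    have "(B * B) $$ (i,i) = (\<Sum>k\<in>{0..<n}. B $$ (i,k) * B $$ (k,i))"
      using Bc i by (simp add: scalar_prod_def)
    also have "\<dots> = (\<Sum>k\<in>{i}. B $$ (i,k) * B $$ (k,i))"
    proof (rule sum.mono_neutral_right)
      show "\<forall>k\<in>{0..<n} - {i}. B $$ (i, k) * B $$ (k, i) = 0"
      proof
        fix k assume k: "k \<in> {0..<n} - {i}"
        show "B $$ (i, k) * B $$ (k, i) = 0"
        proof (cases "k < i")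
          case True
          then show ?thesis using ut Bc i by (auto simp: upper_triangular_def)
        next
          case False
          then have "i < k" using k by auto
          then show ?thesis using ut Bc k by (auto simp: upper_triangular_def)
        qed
      qed
    qed (use i in auto)
    finally have "B $$ (i,i) * B $$ (i,i) = B $$ (i,i)" using BB by simp
    then show ?thesis by (metis mult_cancel_right1 mult_zero_left)
  qed
  have "tr Q = tr (P * (B * P'))" using QB Pc Bc P'c by (simp add: assoc_mult_mat[of _ n n _ n _ n])
  also have "\<dots> = tr ((B * P') * P)" using Pc Bc P'c by (intro tr_mult_comm) auto
  also have "\<dots> = tr B" using Pc Bc P'c P'P by (simp add: assoc_mult_mat[of _ n n _ n _ n])
  also have "\<dots> = (\<Sum>i<n. if B $$ (i,i) = 1 then 1 else 0)"
    unfolding tr_def using Bc diag by (auto intro!: sum.cong) (metis lessThan_iff)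
  also have "\<dots> = of_nat (card {i\<in>{..<n}. B $$ (i,i) = 1})"
    by (simp add: sum.If_cases Int_def)
  finally show ?thesis by blast
qed

lemma idem_tr_real:
  fixes Q :: "real mat"
  assumes Q: "Q \<in> carrier_mat n n" and idem: "Q * Q = Q"
  shows "\<exists>m::nat. tr Q = real m"
proof -
  let ?C = "map_mat complex_of_real Q"
  have "?C * ?C = ?C" using of_real_hom.mat_hom_mult[OF Q Q] idem by metis
  then obtain m :: nat where "tr ?C = of_nat m" using idem_tr_complex[of ?C n] Q by auto
  moreover have "tr ?C = complex_of_real (tr Q)" using Q unfolding tr_def by simp
  ultimately have "complex_of_real (tr Q) = complex_of_real (real m)" by simp
  then show ?thesis using of_real_eq_iff by blast
qed

lemma mat_trace_tr: "mat_trace A = tr A"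
  unfolding mat_trace_def tr_def by simp

lemma tr_add: "A \<in> carrier_mat n n \<Longrightarrow> B \<in> carrier_mat n n \<Longrightarrow> tr (A + B) = tr A + tr B"
  unfolding tr_def by (simp add: sum.distrib)

lemma tr_minus: "A \<in> carrier_mat n n \<Longrightarrow> B \<in> carrier_mat n n \<Longrightarrow> tr (A - B) = tr A - tr B"
  unfolding tr_def by (simp add: sum_subtractf)

lemma tr_smult: "A \<in> carrier_mat n n \<Longrightarrow> tr (k \<cdot>\<^sub>m A) = k * tr A"
  unfolding tr_def by (simp add: sum_distrib_left)

lemma tr_one: "tr (1\<^sub>m n :: real mat) = real n"
  unfolding tr_def by simp

theorem lemma3p2:
  fixes n d :: nat and rho :: "(nat \<Rightarrow> nat) \<Rightarrow> real mat"
  assumes "n \<ge> 4"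
    and "real_rep n d rho"
  shows "\<exists>k::int. (character rho id - character rho (transpose 1 2 \<circ> transpose 3 4)) / 2
                  = real_of_int (2 * k)"
proof -
  define g1 :: "nat \<Rightarrow> nat" where "g1 = transpose 1 2 \<circ> transpose 3 4"
  define g2 :: "nat \<Rightarrow> nat" where "g2 = transpose 1 3 \<circ> transpose 2 4"
  define g3 :: "nat \<Rightarrow> nat" where "g3 = transpose 1 4 \<circ> transpose 2 3"
  define t :: "nat \<Rightarrow> nat" where "t = transpose 2 3"
  define u :: "nat \<Rightarrow> nat" where "u = transpose 2 4"
  have S: "1 \<in> {1..n}" "2 \<in> {1..n}" "3 \<in> {1..n}" "4 \<in> {1..n}" using assms(1) by auto
  have pg1: "g1 permutes {1..n}" unfolding g1_def
    by (intro permutes_compose permutes_swap_id S)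
  have pg2: "g2 permutes {1..n}" unfolding g2_def
    by (intro permutes_compose permutes_swap_id S)
  have pg3: "g3 permutes {1..n}" unfolding g3_def
    by (intro permutes_compose permutes_swap_id S)
  have pt: "t permutes {1..n}" unfolding t_def by (intro permutes_swap_id S)
  have pu: "u permutes {1..n}" unfolding u_def by (intro permutes_swap_id S)
  have e11: "g1 \<circ> g1 = id" unfolding g1_def by (auto simp: fun_eq_iff transpose_def)
  have e22: "g2 \<circ> g2 = id" unfolding g2_def by (auto simp: fun_eq_iff transpose_def)
  have e12: "g1 \<circ> g2 = g3" unfolding g1_def g2_def g3_def by (auto simp: fun_eq_iff transpose_def)
  have e21: "g2 \<circ> g1 = g3" unfolding g1_def g2_def g3_def by (auto simp: fun_eq_iff transpose_def)
  have ett: "t \<circ> t = id" unfolding t_def by (auto simp: fun_eq_iff transpose_def)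
  have euu: "u \<circ> u = id" unfolding u_def by (auto simp: fun_eq_iff transpose_def)
  have ct: "t \<circ> g1 \<circ> t = g2" unfolding t_def g1_def g2_def by (auto simp: fun_eq_iff transpose_def)
  have cu: "u \<circ> g1 \<circ> u = g3" unfolding u_def g1_def g3_def by (auto simp: fun_eq_iff transpose_def)
  have car: "\<And>s. s permutes {1..n} \<Longrightarrow> rho s \<in> carrier_mat d d"
    and rid: "rho id = 1\<^sub>m d"
    and hom: "\<And>s s'. s permutes {1..n} \<Longrightarrow> s' permutes {1..n} \<Longrightarrow> rho (s \<circ> s') = rho s * rho s'"
    using assms(2) unfolding real_rep_def by auto
  define A1 where "A1 = rho g1"
  define A2 where "A2 = rho g2"
  define A3 where "A3 = rho g3"
  define I where "I = (1\<^sub>m d :: real mat)"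
  have c1: "A1 \<in> carrier_mat d d" using car pg1 A1_def by auto
  have c2: "A2 \<in> carrier_mat d d" using car pg2 A2_def by auto
  have c3: "A3 \<in> carrier_mat d d" using car pg3 A3_def by auto
  have cI: "I \<in> carrier_mat d d" unfolding I_def by auto
  have m11: "A1 * A1 = I" using hom[OF pg1 pg1] e11 rid unfolding A1_def I_def by simp
  have m22: "A2 * A2 = I" using hom[OF pg2 pg2] e22 rid unfolding A2_def I_def by simp
  have m12: "A1 * A2 = A3" using hom[OF pg1 pg2] e12 unfolding A1_def A2_def A3_def by simp
  have m21: "A2 * A1 = A3" using hom[OF pg2 pg1] e21 unfolding A1_def A2_def A3_def by simp
  have conj: "tr (rho s * A1 * rho s) = tr A1" if ps: "s permutes {1..n}" and ss: "s \<circ> s = id" for s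
  proof -
    have cs: "rho s \<in> carrier_mat d d" using car ps by auto
    have "tr (rho s * A1 * rho s) = tr (rho s * (A1 * rho s))"
      using cs c1 by (simp add: assoc_mult_mat[of _ d d _ d _ d])
    also have "\<dots> = tr ((A1 * rho s) * rho s)" using cs c1 by (intro tr_mult_comm) auto
    also have "\<dots> = tr (A1 * (rho s * rho s))" using cs c1 by (simp add: assoc_mult_mat[of _ d d _ d _ d])
    also have "rho s * rho s = I" using hom[OF ps ps] ss rid unfolding I_def by simp
    finally show ?thesis using c1 unfolding I_def by simp
  qed
  have tr2: "tr A2 = tr A1"
    using conj[OF pt ett] hom[OF pt pg1] hom[OF permutes_compose[OF pg1 pt] pt] ct
    unfolding A1_def A2_def by (simp add: pt pg1 permutes_compose)
  have tr3: "tr A3 = tr A1"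
    using conj[OF pu euu] hom[OF pu pg1] hom[OF permutes_compose[OF pg1 pu] pu] cu
    unfolding A1_def A3_def by (simp add: pu pg1 permutes_compose)
  define X where "X = I + A1"
  define Y where "Y = I - A2"
  have cX: "X \<in> carrier_mat d d" unfolding X_def using cI c1 by auto
  have cY: "Y \<in> carrier_mat d d" unfolding Y_def using cI c2 by auto
  have XY: "X * Y = (I - A2) + (A1 - A3)"
  proof -
    have "X * Y = I * Y + A1 * Y" unfolding X_def using cI c1 cY by (rule add_mult_distrib_mat)
    also have "A1 * Y = A1 * I - A1 * A2" unfolding Y_def using c1 cI c2 by (rule mult_minus_distrib_mat)
    finally show ?thesis using cI c1 c2 m12 unfolding Y_def I_def by simp
  qed
  have YX: "Y * X = (I + A1) - (A2 + A3)"
  proof -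
    have "Y * X = I * X - A2 * X" unfolding Y_def using cI c2 cX by (rule minus_mult_distrib_mat)
    also have "A2 * X = A2 * I + A2 * A1" unfolding X_def using c2 cI c1 by (rule mult_add_distrib_mat)
    finally show ?thesis using cI c1 c2 m21 unfolding X_def I_def by simp
  qed
  have XYc: "Y * X = X * Y" unfolding XY YX
    by (rule eq_matI) (use cI c1 c2 c3 in auto)
  have XX: "X * X = 2 \<cdot>\<^sub>m X"
  proof -
    have "X * X = I * X + A1 * X" using cI c1 cX unfolding X_def by (rule add_mult_distrib_mat)
    also have "A1 * X = A1 * I + A1 * A1" unfolding X_def using c1 cI c1 by (rule mult_add_distrib_mat)
    finally have "X * X = I * X + (A1 * I + A1 * A1)" .
    then have "X * X = X + (A1 + I)" using cI c1 m11 cX unfolding I_def by simp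
    then show ?thesis unfolding X_def by (intro eq_matI) (use cI c1 in auto)
  qed
  have YY: "Y * Y = 2 \<cdot>\<^sub>m Y"
  proof -
    have "Y * Y = I * Y - A2 * Y" using cI c2 cY unfolding Y_def by (rule minus_mult_distrib_mat)
    also have "A2 * Y = A2 * I - A2 * A2" unfolding Y_def using c2 cI c2 by (rule mult_minus_distrib_mat)
    finally have "Y * Y = I * Y - (A2 * I - A2 * A2)" .
    then have "Y * Y = Y - (A2 - I)" using cI c2 m22 cY unfolding I_def by simp
    then show ?thesis unfolding Y_def by (intro eq_matI) (use cI c2 in auto)
  qed
  define M where "M = X * Y"
  have cM: "M \<in> carrier_mat d d" unfolding M_def using cX cY by auto
  have MM: "M * M = 4 \<cdot>\<^sub>m M"
  proof -
    have "M * M = X * (Y * X) * Y" unfolding M_def using cX cY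
      by (simp add: assoc_mult_mat[of _ d d _ d _ d])
    also have "\<dots> = (X * X) * (Y * Y)" unfolding XYc using cX cY
      by (simp add: assoc_mult_mat[of _ d d _ d _ d])
    also have "\<dots> = (2 \<cdot>\<^sub>m X) * (2 \<cdot>\<^sub>m Y)" unfolding XX YY ..
    also have "\<dots> = 2 \<cdot>\<^sub>m (X * (2 \<cdot>\<^sub>m Y))"
      by (rule mult_smult_assoc_mat) (use cX cY in auto)
    also have "\<dots> = 2 \<cdot>\<^sub>m (2 \<cdot>\<^sub>m M)" unfolding M_def using mult_smult_distrib[OF cX cY] by simp
    also have "\<dots> = 4 \<cdot>\<^sub>m M" by (rule eq_matI) auto
    finally show ?thesis .
  qed
  define Q where "Q = (1/4) \<cdot>\<^sub>m M"
  have cQ: "Q \<in> carrier_mat d d" unfolding Q_def using cM by auto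
  have QQ: "Q * Q = Q"
  proof -
    have "Q * Q = (1/4) \<cdot>\<^sub>m (M * ((1/4) \<cdot>\<^sub>m M))" unfolding Q_def
      by (rule mult_smult_assoc_mat) (use cM in auto)
    also have "\<dots> = (1/4) \<cdot>\<^sub>m ((1/4) \<cdot>\<^sub>m (4 \<cdot>\<^sub>m M))" using mult_smult_distrib[OF cM cM] MM by simp
    also have "\<dots> = Q" unfolding Q_def by (rule eq_matI) auto
    finally show ?thesis .
  qed
  obtain m :: nat where trQ: "tr Q = real m" using idem_tr_real[OF cQ QQ] by blast
  have "tr M = tr (I - A2) + tr (A1 - A3)"
    unfolding M_def XY by (rule tr_add[of _ d]) (use cI c1 c2 c3 in auto)
  also have "\<dots> = (tr I - tr A2) + (tr A1 - tr A3)"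
    using tr_minus[OF cI c2] tr_minus[OF c1 c3] by simp
  finally have "tr M = real d - tr A1" using tr2 tr3 unfolding I_def tr_one by simp
  then have "real d - tr A1 = 4 * real m" using trQ unfolding Q_def tr_smult[OF cM] by simp
  moreover have "character rho id = real d" unfolding character_def mat_trace_tr rid tr_one ..
  moreover have "character rho (transpose 1 2 \<circ> transpose 3 4) = tr A1"
    unfolding character_def mat_trace_tr A1_def g1_def ..
  ultimately show ?thesis by (intro exI[of _ "int m"]) simp
qed

end
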